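(* $22 \le R(B_4,B_7) \le 23$.
   Context: For graphs $G,H$, the Ramsey number $R(G,H)$ is the smallest integer $N$ such that every red/blue coloring of the edges of $K_N$ contains a red copy of $G$ (as a subgraph, not necessarily induced) or a blue copy of $H$. The book $B_k$ is the graph on $k+2$ vertices consisting of an edge $uv$ together with $k$ further vertices, each adjacent exactly to $u$ and $v$. *)

theory Defs
  imports Main
begin

text \<open>A red/blue edge colouring of the complete graph on vertex set V is represented by a
symmetric predicate c (c x y = True means the edge xy is red, False means blue); only
values on pairs of distinct vertices of V matter.\<close>

definition colouring :: "nat set \<Rightarrow> (nat \<Rightarrow> nat \<Rightarrow> bool) \<Rightarrow> bool" where
  "colouring V c \<longleftrightarrow> (\<forall>x\<in>V. \<forall>y\<in>V. c x y = c y x)"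

text \<open>The complete graph on V contains a copy of the book B_k all of whose edges satisfy P:
a spine uv and k further vertices each joined to both u and v.\<close>

definition has_book :: "nat set \<Rightarrow> (nat \<Rightarrow> nat \<Rightarrow> bool) \<Rightarrow> nat \<Rightarrow> bool" where
  "has_book V P k \<longleftrightarrow> (\<exists>u\<in>V. \<exists>v\<in>V. \<exists>S. u \<noteq> v \<and> P u v \<and> S \<subseteq> V - {u, v}
      \<and> card S = k \<and> (\<forall>w\<in>S. P u w \<and> P v w))"

definition book_arrows :: "nat \<Rightarrow> nat \<Rightarrow> nat \<Rightarrow> bool" where
  "book_arrows N k l \<longleftrightarrow> (\<forall>c. colouring {..<N} c \<longrightarrow>
      has_book {..<N} c k \<or> has_book {..<N} (\<lambda>x y. \<not> c x y) l)"

definition ramsey_book :: "nat \<Rightarrow> nat \<Rightarrow> nat" where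
  "ramsey_book k l = (LEAST N. book_arrows N k l)"

end

theory Submission
  imports Defs "Jordan_Normal_Form.Schur_Decomposition"
begin


lemma has_book_of:
  assumes "u \<in> V" "v \<in> V" "u \<noteq> v" "P u v" "k \<le> card {w \<in> V - {u,v}. P u w \<and> P v w}"
    "finite V"
  shows "has_book V P k"
proof -
  have "finite {w \<in> V - {u,v}. P u w \<and> P v w}" using assms(6) by auto
  then obtain S where S: "S \<subseteq> {w \<in> V - {u,v}. P u w \<and> P v w}" "card S = k"
    using obtain_subset_with_card_n[OF assms(5)] by metis
  show ?thesis unfolding has_book_def using assms S by blast
qed

lemma even_sym_sum:
  fixes f :: "nat \<Rightarrow> nat \<Rightarrow> int"
  assumes "\<And>v w. f v w = f w v" "\<And>v. f v v = 0"
  shows "even (\<Sum>v<n. \<Sum>w<n. f v w)"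
proof (induction n)
  case 0 then show ?case by simp
next
  case (Suc n)
  have e: "(\<Sum>v<n. f v n) = (\<Sum>w<n. f n w)" using assms(1) by simp
  have "(\<Sum>v<Suc n. \<Sum>w<Suc n. f v w) = (\<Sum>v<n. \<Sum>w<n. f v w) + (\<Sum>v<n. f v n) + (\<Sum>w<n. f n w)"
    using assms(2) by (simp add: sum.distrib lessThan_Suc algebra_simps)
  also have "\<dots> = (\<Sum>v<n. \<Sum>w<n. f v w) + 2 * (\<Sum>w<n. f n w)" using e by simp
  finally have h: "(\<Sum>v<Suc n. \<Sum>w<Suc n. f v w) = (\<Sum>v<n. \<Sum>w<n. f v w) + 2 * (\<Sum>w<n. f n w)" .
  show ?case unfolding h using Suc.IH by simp
qed

lemma prod_nonneg_int: "(x::int) \<noteq> 10 \<Longrightarrow> x \<noteq> 11 \<Longrightarrow> (x - 10) * (x - 11) > 0"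
  by (cases "x \<le> 10") (auto intro: mult_pos_pos mult_neg_neg)

lemma prod_nonneg_int': "(x::int) \<ge> 0 \<longrightarrow> (x - 10) * (x - 11) \<ge> 0 \<or> True"
  by simp

lemma prod_ge0: "((x::int) - 10) * (x - 11) \<ge> 0"
  using prod_nonneg_int[of x] by (cases "x = 10 \<or> x = 11") auto



locale bk =
  fixes c :: "nat \<Rightarrow> nat \<Rightarrow> bool"
  assumes csym: "\<And>x y. x < 23 \<Longrightarrow> y < 23 \<Longrightarrow> c x y = c y x"
    and nored: "\<not> has_book {..<23} c 4"
    and noblue: "\<not> has_book {..<23} (\<lambda>x y. \<not> c x y) 7"
begin

abbreviation "V \<equiv> {..<23::nat}"

definition r :: "nat \<Rightarrow> nat \<Rightarrow> int" where
  "r u w = (if u < 23 \<and> w < 23 \<and> u \<noteq> w \<and> c u w then 1 else 0)"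
definition q :: "nat \<Rightarrow> nat \<Rightarrow> int" where
  "q u w = (if u < 23 \<and> w < 23 \<and> u \<noteq> w \<and> \<not> c u w then 1 else 0)"
definition dl :: "nat \<Rightarrow> nat \<Rightarrow> int" where "dl u w = (if u = w then 1 else 0)"
definition d :: "nat \<Rightarrow> int" where "d u = (\<Sum>w\<in>V. r u w)"
definition t :: "nat \<Rightarrow> nat \<Rightarrow> int" where "t u v = (\<Sum>w\<in>V. r u w * r v w)"
definition s :: "nat \<Rightarrow> nat \<Rightarrow> int" where "s u v = (\<Sum>w\<in>V. q u w * q v w)"
definition P :: "nat \<Rightarrow> int" where "P u = (\<Sum>w\<in>V. r u w * d w)"
definition D :: int where "D = (\<Sum>v\<in>V. d v)"
definition tau :: "nat \<Rightarrow> int" where "tau u = (\<Sum>v\<in>V. r u v * t u v)"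
definition Phi :: "nat \<Rightarrow> int" where
  "Phi u = (\<Sum>v\<in>V. r u v * (3 - t u v)) + (\<Sum>v\<in>V. q u v * (6 - s u v))"

lemma r_sym: "r u w = r w u"
  unfolding r_def using csym by auto

lemma r01: "r u w = 0 \<or> r u w = 1" unfolding r_def by auto
lemma rr: "r u w * r u w = r u w" using r01[of u w] by auto
lemma r_diag: "r u u = 0" unfolding r_def by auto

lemma q_eq: "u \<in> V \<Longrightarrow> w \<in> V \<Longrightarrow> q u w = 1 - r u w - dl u w"
  unfolding q_def r_def dl_def by auto

lemma sum_dl_mult: "u \<in> V \<Longrightarrow> (\<Sum>w\<in>V. dl u w * f w) = f u"
proof -
  assume u: "u \<in> V"
  have "(\<Sum>w\<in>V. dl u w * f w) = (\<Sum>w\<in>V. if u = w then f w else 0)"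
    by (rule sum.cong) (auto simp: dl_def)
  also have "\<dots> = f u" using u by simp
  finally show ?thesis .
qed
lemma sum_r_dl: "v \<in> V \<Longrightarrow> (\<Sum>w\<in>V. r u w * dl v w) = r u v"
  using sum_dl_mult[of v "r u"] by (simp add: mult.commute)
lemma sum_dl_r: "u \<in> V \<Longrightarrow> (\<Sum>w\<in>V. dl u w * r v w) = r v u"
  using sum_dl_mult[of u "r v"] by simp
lemma sum_dl_dl: "u \<in> V \<Longrightarrow> v \<in> V \<Longrightarrow> (\<Sum>w\<in>V. dl u w * dl v w) = dl u v"
  using sum_dl_mult[of u "dl v"] by (simp add: dl_def)
lemma sum_dl: "u \<in> V \<Longrightarrow> (\<Sum>w\<in>V. dl u w) = 1"
  using sum_dl_mult[of u "\<lambda>_. 1"] by simp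

lemma t_card: "t u v = int (card {w \<in> V. r u w = 1 \<and> r v w = 1})"
proof -
  have "t u v = (\<Sum>w\<in>V. if r u w = 1 \<and> r v w = 1 then 1 else 0)"
    unfolding t_def by (rule sum.cong) (use r01 in auto)
  also have "\<dots> = int (card {w \<in> V. r u w = 1 \<and> r v w = 1})"
    by (simp add: sum.If_cases Int_def)
  finally show ?thesis .
qed

lemma s_card: "s u v = int (card {w \<in> V. q u w = 1 \<and> q v w = 1})"
proof -
  have "s u v = (\<Sum>w\<in>V. if q u w = 1 \<and> q v w = 1 then 1 else 0)"
    unfolding s_def by (rule sum.cong) (auto simp: q_def)
  also have "\<dots> = int (card {w \<in> V. q u w = 1 \<and> q v w = 1})"
    by (simp add: sum.If_cases Int_def)
  finally show ?thesis .
qed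

lemma t_le: assumes "r u v = 1" shows "t u v \<le> 3"
proof (rule ccontr)
  have uv: "u < 23" "v < 23" "u \<noteq> v" "c u v" using assms by (auto simp: r_def split: if_splits)
  assume "\<not> t u v \<le> 3"
  hence "4 \<le> card {w \<in> V. r u w = 1 \<and> r v w = 1}" using t_card by simp
  also have "{w \<in> V. r u w = 1 \<and> r v w = 1} = {w \<in> V - {u,v}. c u w \<and> c v w}"
    unfolding r_def using uv by auto
  finally have "has_book V c 4"
    using uv by (intro has_book_of[of u _ v]) auto
  thus False using nored by simp
qed

lemma s_le: assumes "q u v = 1" shows "s u v \<le> 6"
proof (rule ccontr)
  have uv: "u < 23" "v < 23" "u \<noteq> v" "\<not> c u v" using assms by (auto simp: q_def split: if_splits)
  assume "\<not> s u v \<le> 6"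
  hence "7 \<le> card {w \<in> V. q u w = 1 \<and> q v w = 1}" using s_card by simp
  also have "{w \<in> V. q u w = 1 \<and> q v w = 1} = {w \<in> V - {u,v}. \<not> c u w \<and> \<not> c v w}"
    unfolding q_def using uv by auto
  finally have "has_book V (\<lambda>x y. \<not> c x y) 7"
    using uv by (intro has_book_of[of u _ v]) auto
  thus False using noblue by simp
qed

lemma s_eq: assumes "u \<in> V" "v \<in> V"
  shows "s u v = 21 - d u - d v + t u v + 2 * r u v + dl u v"
proof -
  have "s u v = (\<Sum>w\<in>V. 1 - r v w - dl v w - r u w + r u w * r v w + r u w * dl v w
        - dl u w + dl u w * r v w + dl u w * dl v w)"
    unfolding s_def using assms by (intro sum.cong) (auto simp: q_eq algebra_simps)
  also have "\<dots> = 23 - d v - 1 - d u + t u v + r u v - 1 + r v u + dl u v"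
    using assms by (simp add: sum.distrib sum_subtractf sum_r_dl sum_dl_r sum_dl_dl sum_dl
        d_def t_def)
  finally show ?thesis using r_sym[of v u] by simp
qed


lemma t_diag: "t u u = d u" unfolding t_def d_def by (simp add: rr)

lemma sum_t: "(\<Sum>v\<in>V. t u v) = P u"
proof -
  have "(\<Sum>v\<in>V. t u v) = (\<Sum>w\<in>V. \<Sum>v\<in>V. r u w * r v w)"
    unfolding t_def by (rule sum.swap)
  also have "\<dots> = (\<Sum>w\<in>V. r u w * d w)"
    unfolding d_def by (simp add: sum_distrib_left r_sym)
  finally show ?thesis unfolding P_def .
qed

lemma sum_P: "(\<Sum>u\<in>V. P u) = (\<Sum>u\<in>V. d u * d u)"
proof -
  have "(\<Sum>u\<in>V. P u) = (\<Sum>w\<in>V. \<Sum>u\<in>V. r u w * d w)"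
    unfolding P_def by (rule sum.swap)
  also have "\<dots> = (\<Sum>w\<in>V. d w * d w)"
    unfolding d_def by (simp add: sum_distrib_right r_sym)
  finally show ?thesis .
qed

lemma sum_s: "u \<in> V \<Longrightarrow> (\<Sum>v\<in>V. s u v) = 484 - 21 * d u - D + P u"
proof -
  assume u: "u \<in> V"
  have "(\<Sum>v\<in>V. s u v) = (\<Sum>v\<in>V. 21 - d u - d v + t u v + 2 * r u v + dl u v)"
    using u by (intro sum.cong) (auto simp: s_eq)
  also have "\<dots> = 483 - 23 * d u - D + P u + 2 * d u + 1"
    using u by (simp add: sum.distrib sum_subtractf sum_t sum_dl sum_distrib_left[symmetric] D_def d_def[symmetric])
  finally show ?thesis by simp
qed

lemma sum_rs: "u \<in> V \<Longrightarrow> (\<Sum>v\<in>V. r u v * s u v) = 23 * d u - d u * d u - P u + tau u"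
proof -
  assume u: "u \<in> V"
  have "(\<Sum>v\<in>V. r u v * s u v) = (\<Sum>v\<in>V. 21 * r u v - d u * r u v - r u v * d v + r u v * t u v + 2 * (r u v * r u v) + r u v * dl u v)"
    using u by (intro sum.cong) (auto simp: s_eq algebra_simps)
  also have "\<dots> = 21 * d u - d u * d u - P u + tau u + 2 * d u + r u u"
    using u by (simp add: sum.distrib sum_subtractf rr sum_r_dl sum_distrib_left[symmetric] d_def[symmetric] P_def[symmetric] tau_def[symmetric])
  finally show ?thesis by (simp add: r_diag)
qed

lemma sum_q: "u \<in> V \<Longrightarrow> (\<Sum>v\<in>V. q u v) = 22 - d u"
proof -
  assume u: "u \<in> V"
  have "(\<Sum>v\<in>V. q u v) = (\<Sum>v\<in>V. 1 - r u v - dl u v)"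
    using u by (intro sum.cong) (auto simp: q_eq)
  also have "\<dots> = 22 - d u" using u by (simp add: sum_subtractf sum_dl d_def)
  finally show ?thesis .
qed

lemma s_diag: "u \<in> V \<Longrightarrow> s u u = 22 - d u"
  by (simp add: s_eq t_diag r_diag dl_def)

lemma sum_qs: "u \<in> V \<Longrightarrow> (\<Sum>v\<in>V. q u v * s u v) = (\<Sum>v\<in>V. s u v) - (\<Sum>v\<in>V. r u v * s u v) - s u u"
proof -
  assume u: "u \<in> V"
  have "(\<Sum>v\<in>V. q u v * s u v) = (\<Sum>v\<in>V. s u v - r u v * s u v - dl u v * s u v)"
    using u by (intro sum.cong) (auto simp: q_eq algebra_simps)
  also have "\<dots> = (\<Sum>v\<in>V. s u v) - (\<Sum>v\<in>V. r u v * s u v) - s u u"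
    using u by (simp add: sum_subtractf sum_dl_mult)
  finally show ?thesis .
qed

lemma Phi_eq: "u \<in> V \<Longrightarrow> Phi u = -330 + 40 * d u - d u * d u + D - 2 * P u"
proof -
  assume u: "u \<in> V"
  have a: "(\<Sum>v\<in>V. r u v * (3 - t u v)) = 3 * d u - tau u"
    by (simp add: algebra_simps sum_subtractf sum_distrib_left[symmetric] d_def tau_def)
  have "(\<Sum>v\<in>V. q u v * (6 - s u v)) = (\<Sum>v\<in>V. 6 * q u v - q u v * s u v)"
    by (simp add: algebra_simps)
  also have "\<dots> = 6 * (\<Sum>v\<in>V. q u v) - (\<Sum>v\<in>V. q u v * s u v)"
    by (simp add: sum_subtractf sum_distrib_left)
  finally have b: "(\<Sum>v\<in>V. q u v * (6 - s u v)) = 6 * (22 - d u) - (\<Sum>v\<in>V. q u v * s u v)"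
    using u by (simp add: sum_q)
  show ?thesis unfolding Phi_def a b using u by (simp add: sum_qs sum_s sum_rs s_diag)
qed

lemma term1_nonneg: "0 \<le> r u v * (3 - t u v)"
  using r01[of u v] t_le[of u v] by auto
lemma q01: "q u w = 0 \<or> q u w = 1" unfolding q_def by auto
lemma term2_nonneg: "0 \<le> q u v * (6 - s u v)"
  using q01[of u v] s_le[of u v] by auto

lemma Phi_nonneg: "0 \<le> Phi u"
  unfolding Phi_def using term1_nonneg term2_nonneg
  by (intro add_nonneg_nonneg sum_nonneg) auto


lemma total_zero: "(\<Sum>u\<in>V. Phi u + 3 * ((d u - 10) * (d u - 11))) = 0"
proof -
  have "(\<Sum>u\<in>V. Phi u + 3 * ((d u - 10) * (d u - 11)))
     = (\<Sum>u\<in>V. 40 * d u + D - 2 * P u - 63 * d u + 2 * (d u * d u))"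
    by (intro sum.cong) (auto simp: Phi_eq algebra_simps)
  also have "\<dots> = 40 * D + 23 * D - 2 * (\<Sum>u\<in>V. d u * d u) - 63 * D + 2 * (\<Sum>u\<in>V. d u * d u)"
    by (simp add: sum.distrib sum_subtractf sum_distrib_left[symmetric] sum_P D_def)
  finally show ?thesis by simp
qed

lemma both_zero: "u \<in> V \<Longrightarrow> Phi u = 0 \<and> (d u - 10) * (d u - 11) = 0"
proof -
  assume u: "u \<in> V"
  have nn: "\<And>x. x \<in> V \<Longrightarrow> 0 \<le> Phi x + 3 * ((d x - 10) * (d x - 11))"
    using Phi_nonneg prod_ge0 by (auto intro!: add_nonneg_nonneg)
  have "Phi u + 3 * ((d u - 10) * (d u - 11)) = 0"
    using total_zero sum_nonneg_eq_0_iff[of V, OF _ nn] u by auto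
  with Phi_nonneg[of u] prod_ge0[of "d u"] show ?thesis by linarith
qed

lemma terms_zero: assumes "u \<in> V" "v \<in> V"
  shows "r u v * (3 - t u v) = 0" "q u v * (6 - s u v) = 0"
proof -
  have "Phi u = 0" using both_zero assms by auto
  hence s1: "(\<Sum>v\<in>V. r u v * (3 - t u v)) = 0" and s2: "(\<Sum>v\<in>V. q u v * (6 - s u v)) = 0"
    unfolding Phi_def using term1_nonneg term2_nonneg
    by (smt (verit) sum_nonneg)+
  show "r u v * (3 - t u v) = 0"
    using s1 sum_nonneg_eq_0_iff[of V "\<lambda>v. r u v * (3 - t u v)"] term1_nonneg assms by auto
  show "q u v * (6 - s u v) = 0"
    using s2 sum_nonneg_eq_0_iff[of V "\<lambda>v. q u v * (6 - s u v)"] term2_nonneg assms by auto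
qed

lemma tau_3: "u \<in> V \<Longrightarrow> tau u = 3 * d u"
proof -
  assume u: "u \<in> V"
  have "tau u = (\<Sum>v\<in>V. 3 * r u v)"
    unfolding tau_def using terms_zero(1)[OF u] by (intro sum.cong) (auto simp: algebra_simps)
  thus ?thesis by (simp add: d_def sum_distrib_left)
qed

lemma tau_even: "even (tau u)"
proof -
  have "tau u = (\<Sum>v<23. \<Sum>w<23. r u v * r u w * r v w)"
    unfolding tau_def t_def by (simp add: sum_distrib_left mult.assoc)
  also have "even \<dots>"
    by (rule even_sym_sum) (auto simp: r_sym r_diag)
  finally show ?thesis .
qed

lemma d_10: "u \<in> V \<Longrightarrow> d u = 10"
proof -
  assume u: "u \<in> V"
  have "even (3 * d u)" using tau_even tau_3[OF u] by metis
  hence "even (d u)" by simp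
  moreover have "d u = 10 \<or> d u = 11" using both_zero[OF u] by auto
  ultimately show ?thesis by auto
qed

lemma t_val: assumes "u \<in> V" "v \<in> V" shows "t u v = 5 + 5 * dl u v - 2 * r u v"
proof (cases "u = v")
  case True thus ?thesis using assms by (simp add: t_diag d_10 r_diag dl_def)
next
  case False
  show ?thesis
  proof (cases "r u v = 1")
    case True thus ?thesis using terms_zero(1)[OF assms] False by (simp add: dl_def)
  next
    case r0: False
    hence r0: "r u v = 0" using r01 by metis
    hence "q u v = 1" using q_eq[OF assms] False by (simp add: dl_def)
    hence "s u v = 6" using terms_zero(2)[OF assms] by simp
    thus ?thesis using s_eq[OF assms] d_10 assms r0 False by (simp add: dl_def)
  qed
qed

end


lemma sq6_aux: "\<forall>a b::int. nat \<bar>a\<bar> = n \<longrightarrow> a * a = 6 * (b * b) \<longrightarrow> b = 0"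
proof (induction n rule: less_induct)
  case (less n)
  show ?case
  proof (intro allI impI)
    fix a b :: int assume n: "nat \<bar>a\<bar> = n" and e: "a * a = 6 * (b * b)"
    show "b = 0"
    proof (cases "a = 0")
      case True then show ?thesis using e by simp
    next
      case False
      have "even (a * a)" using e by simp
      hence "even a" by simp
      then obtain a' where a': "a = 2 * a'" by blast
      hence "2 * (a' * a') = 3 * (b * b)" using e by simp
      hence "even (3 * (b * b))" by (metis dvd_triv_left)
      hence "even b" by simp
      then obtain b' where b': "b = 2 * b'" by blast
      have e': "a' * a' = 6 * (b' * b')" using e a' b' by simp
      have "nat \<bar>a'\<bar> < n" using n a' False by simp
      hence "b' = 0" using less.IH e' by blast
      thus ?thesis using b' by simp
    qed
  qed
qed

lemma sqrt6_irr: assumes "real_of_int a + real_of_int b * sqrt 6 = 0" shows "b = 0"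
proof (rule ccontr)
  assume b: "b \<noteq> 0"
  have "real_of_int a = - real_of_int b * sqrt 6" using assms by simp
  hence "real_of_int a * real_of_int a = real_of_int b * real_of_int b * (sqrt 6 * sqrt 6)"
    by simp
  hence "real_of_int (a * a) = real_of_int (6 * (b * b))" by simp
  hence "a * a = 6 * (b * b)" by (simp only: of_int_eq_iff)
  thus False using sq6_aux b by blast
qed

lemma dvd_sum_list_map: "(\<forall>x\<in>set xs. (k::int) dvd f x) \<Longrightarrow> k dvd sum_list (map f xs)"
  by (induction xs) auto

lemma sq_ring: "((x::'a::comm_ring_1) + 1 - w) * (x + 1 + w) = x * x + 2 * x + 1 - w * w"
  by (simp add: algebra_simps)

lemma sum_list_split: "sum_list (map (\<lambda>e. of_int (f e) + of_int (g e) * (w::complex)) xs)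
   = of_int (sum_list (map f xs)) + of_int (sum_list (map g xs)) * w"
  by (induction xs) (simp_all add: algebra_simps)

lemma final_contra:
  fixes es :: "complex list"
  assumes len: "length es = 23" and s0: "sum_list es = 0"
    and roots: "\<forall>e\<in>set es. e = 10 \<or> e * e + 2 * e - 5 = 0"
  shows False
proof -
  define w where "w = complex_of_real (sqrt 6)"
  have ww: "w * w = 6"
  proof -
    have "sqrt 6 * sqrt 6 = (6::real)" by simp
    hence "complex_of_real (sqrt 6 * sqrt 6) = 6" by simp
    thus ?thesis unfolding w_def by (simp only: of_real_mult)
  qed
  have roots': "e = 10 \<or> e = -1 + w \<or> e = -1 - w" if "e \<in> set es" for e
  proof -
    have h: "e = 10 \<or> e * e + 2 * e - 5 = 0" using roots that by auto
    have f0: "(e + 1 - w) * (e + 1 + w) = e * e + 2 * e + 1 - w * w" by (rule sq_ring)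
    have f: "e * e + 2 * e - 5 = (e + 1 - w) * (e + 1 + w)" unfolding f0 ww by simp
    show ?thesis
    proof (cases "e = 10")
      case False
      hence "(e + 1 - w) * (e + 1 + w) = 0" using h f by simp
      hence "e + 1 - w = 0 \<or> e + 1 + w = 0" by (simp only: mult_eq_0_iff)
      thus ?thesis by (metis add_diff_cancel_right' diff_add_cancel diff_minus_eq_add eq_neg_iff_add_eq_0 uminus_add_conv_diff)
    qed simp
  qed
  define al :: "complex \<Rightarrow> int" where "al e = (if e = 10 then 10 else -1)" for e
  define be :: "complex \<Rightarrow> int" where "be e = (if e = 10 then 0 else if e = -1 + w then 1 else -1)" for e
  have rep: "e = of_int (al e) + of_int (be e) * w" if e_in: "e \<in> set es" for e
  proof -
    consider "e = 10" | "e \<noteq> 10" "e = -1 + w" | "e \<noteq> 10" "e \<noteq> -1 + w" "e = -1 - w"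
      using roots'[OF e_in] by blast
    thus ?thesis
    proof cases
      case 1 thus ?thesis unfolding al_def be_def by simp
    next
      case 2 thus ?thesis unfolding al_def be_def by simp
    next
      case 3 thus ?thesis unfolding al_def be_def by simp
    qed
  qed
  have "es = map (\<lambda>e. of_int (al e) + of_int (be e) * w) es"
    using rep by (simp add: map_idI)
  hence "sum_list es = of_int (sum_list (map al es)) + of_int (sum_list (map be es)) * w"
    by (metis sum_list_split)
  hence "Re (of_int (sum_list (map al es)) + of_int (sum_list (map be es)) * w) = 0" using s0 by simp
  hence "real_of_int (sum_list (map al es)) + real_of_int (sum_list (map be es)) * sqrt 6 = 0"
    unfolding w_def by simp
  hence "real_of_int (sum_list (map al es)) = 0" using sqrt6_irr by force
  hence A0: "sum_list (map al es) = 0" by simp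
  have "(11::int) dvd sum_list (map (\<lambda>e. al e + 1) es)"
    by (rule dvd_sum_list_map) (auto simp: al_def)
  also have "sum_list (map (\<lambda>e. al e + 1) es) = sum_list (map al es) + 23"
    using len by (simp add: sum_list_addf sum_list_triv)
  finally show False using A0 by simp
qed



definition tr :: "'a::comm_ring_1 mat \<Rightarrow> 'a" where "tr X = (\<Sum>i<dim_row X. X $$ (i,i))"

lemma tr_comm: assumes "X \<in> carrier_mat n m" "Y \<in> carrier_mat m n"
  shows "tr (X * Y) = tr (Y * X)"
proof -
  have "tr (X * Y) = (\<Sum>i<n. \<Sum>k<m. X $$ (i,k) * Y $$ (k,i))"
    using assms unfolding tr_def by (simp add: scalar_prod_def atLeast0LessThan)
  also have "\<dots> = (\<Sum>k<m. \<Sum>i<n. Y $$ (k,i) * X $$ (i,k))"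
    by (subst sum.swap) (simp add: mult.commute)
  also have "\<dots> = tr (Y * X)"
    using assms unfolding tr_def by (simp add: scalar_prod_def atLeast0LessThan)
  finally show ?thesis .
qed

context bk begin

definition Am :: "complex mat" where "Am = mat 23 23 (\<lambda>(i,j). of_int (r i j))"

lemma Am_carrier: "Am \<in> carrier_mat 23 23" unfolding Am_def by simp

lemma eig: assumes "eigenvalue Am e" shows "e = 10 \<or> e * e + 2 * e - 5 = 0"
proof -
  obtain v where v: "v \<in> carrier_vec 23" "v \<noteq> 0\<^sub>v 23" "Am *\<^sub>v v = e \<cdot>\<^sub>v v"
    using assms unfolding eigenvalue_def eigenvector_def Am_def by auto
  define x where "x i = v $ i" for i
  have E: "(\<Sum>j\<in>V. of_int (r i j) * x j) = e * x i" if i: "i < 23" for i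
  proof -
    have "(Am *\<^sub>v v) $ i = (e \<cdot>\<^sub>v v) $ i" using v(3) by simp
    thus ?thesis using i v(1) unfolding Am_def x_def by (simp add: scalar_prod_def atLeast0LessThan)
  qed
  define \<sigma> where "\<sigma> = (\<Sum>j\<in>V. x j)"
  have T1: "(\<Sum>j\<in>V. of_int (t i j) * x j) = e * e * x i" if i: "i < 23" for i
  proof -
    have "(\<Sum>j\<in>V. of_int (t i j) * x j) = (\<Sum>j\<in>V. \<Sum>k\<in>V. of_int (r i k) * (of_int (r k j) * x j))"
    proof (intro sum.cong refl)
      fix j assume "j \<in> V"
      have "complex_of_int (t i j) = (\<Sum>k\<in>V. of_int (r i k) * of_int (r k j))"
        unfolding t_def of_int_sum
      proof (intro sum.cong refl)
        fix k show "complex_of_int (r i k * r j k) = of_int (r i k) * of_int (r k j)"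
          by (simp add: r_sym[of j k])
      qed
      thus "complex_of_int (t i j) * x j = (\<Sum>k\<in>V. of_int (r i k) * (of_int (r k j) * x j))"
        by (simp add: sum_distrib_right mult.assoc)
    qed
    also have "\<dots> = (\<Sum>k\<in>V. of_int (r i k) * (\<Sum>j\<in>V. of_int (r k j) * x j))"
      by (subst sum.swap) (simp add: sum_distrib_left)
    also have "\<dots> = (\<Sum>k\<in>V. of_int (r i k) * (e * x k))"
      by (intro sum.cong) (auto simp: E)
    also have "\<dots> = e * (\<Sum>k\<in>V. of_int (r i k) * x k)"
      by (simp add: sum_distrib_left algebra_simps)
    also have "\<dots> = e * e * x i" using E[OF i] by simp
    finally show ?thesis .
  qed
  have T2: "(\<Sum>j\<in>V. of_int (t i j) * x j) = 5 * \<sigma> + 5 * x i - 2 * e * x i" if i: "i < 23" for i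
  proof -
    have "(\<Sum>j\<in>V. of_int (t i j) * x j) = (\<Sum>j\<in>V. 5 * x j + 5 * (of_int (dl i j) * x j) - 2 * (of_int (r i j) * x j))"
      using i by (intro sum.cong) (auto simp: t_val algebra_simps)
    also have "\<dots> = 5 * \<sigma> + 5 * (\<Sum>j\<in>V. of_int (dl i j) * x j) - 2 * (\<Sum>j\<in>V. of_int (r i j) * x j)"
      by (simp add: sum.distrib sum_subtractf sum_distrib_left \<sigma>_def)
    also have "(\<Sum>j\<in>V. of_int (dl i j) * x j) = x i"
    proof -
      have "(\<Sum>j\<in>V. of_int (dl i j) * x j) = (\<Sum>j\<in>V. if i = j then x j else 0)"
        by (intro sum.cong) (auto simp: dl_def)
      thus ?thesis using i by simp
    qed
    finally show ?thesis using E[OF i] by simp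
  qed
  have S: "e * \<sigma> = 10 * \<sigma>"
  proof -
    have "e * \<sigma> = (\<Sum>i\<in>V. e * x i)" by (simp add: \<sigma>_def sum_distrib_left)
    also have "\<dots> = (\<Sum>i\<in>V. \<Sum>j\<in>V. of_int (r i j) * x j)" by (intro sum.cong) (auto simp: E)
    also have "\<dots> = (\<Sum>j\<in>V. (\<Sum>i\<in>V. of_int (r i j)) * x j)"
      by (subst sum.swap) (simp add: sum_distrib_right)
    also have "\<dots> = (\<Sum>j\<in>V. 10 * x j)"
    proof (intro sum.cong refl)
      fix j assume j: "j \<in> V"
      have "(\<Sum>i\<in>V. complex_of_int (r i j)) = of_int (d j)"
        unfolding d_def by (simp add: r_sym[of _ j])
      thus "(\<Sum>i\<in>V. complex_of_int (r i j)) * x j = 10 * x j" using d_10[OF j] by simp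
    qed
    also have "\<dots> = 10 * \<sigma>" by (simp add: \<sigma>_def sum_distrib_left)
    finally show ?thesis .
  qed
  show ?thesis
  proof (rule ccontr)
    assume ne: "\<not> ?thesis"
    hence "\<sigma> = 0" using S by simp
    have "\<exists>i<23. x i \<noteq> 0"
    proof (rule ccontr)
      assume "\<not> ?thesis"
      hence "v = 0\<^sub>v 23" using v(1) unfolding x_def by (intro eq_vecI) auto
      thus False using v(2) by simp
    qed
    then obtain i where i: "i < 23" "x i \<noteq> 0" by blast
    have "(e * e + 2 * e - 5) * x i = 0" using T1[OF i(1)] T2[OF i(1)] \<open>\<sigma> = 0\<close>
      by (simp add: algebra_simps)
    thus False using ne i by simp
  qed
qed

lemma contradiction: False
proof -
  obtain es where cp: "char_poly Am = (\<Prod>a\<leftarrow>es. [:- a, 1:])" and len: "length es = 23"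
    using char_poly_factorized[OF Am_carrier] by blast
  obtain B P Q where sd: "schur_decomposition Am es = (B, P, Q)"
    by (cases "schur_decomposition Am es") auto
  from schur_decomposition[OF Am_carrier cp sd]
  have sim: "similar_mat_wit Am B P Q" and dg: "diag_mat B = es" by auto
  from sim have car: "B \<in> carrier_mat 23 23" "P \<in> carrier_mat 23 23" "Q \<in> carrier_mat 23 23"
    and QP: "Q * P = 1\<^sub>m 23" and AE: "Am = P * B * Q"
    unfolding similar_mat_wit_def using Am_carrier by (auto simp: Let_def)
  have "tr Am = 0" unfolding tr_def Am_def by (simp add: r_diag)
  also have "tr Am = tr (P * B * Q)" using AE by simp
  also have "\<dots> = tr (Q * (P * B))" using car by (intro tr_comm[of _ 23 23]) auto
  also have "Q * (P * B) = (Q * P) * B" using car by simp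
  also have "\<dots> = B" using QP car by simp
  also have "tr B = sum_list es"
    unfolding dg[symmetric] tr_def diag_mat_def using car
    by (simp add: sum_list_sum_nth atLeast0LessThan)
  finally have s0: "sum_list es = 0" by simp
  have roots: "\<forall>e\<in>set es. e = 10 \<or> e * e + 2 * e - 5 = 0"
  proof
    fix e assume "e \<in> set es"
    hence "poly (char_poly Am) e = 0" unfolding cp poly_prod_list
      by (induction es) auto
    hence "eigenvalue Am e" using eigenvalue_root_char_poly[OF Am_carrier] by simp
    thus "e = 10 \<or> e * e + 2 * e - 5 = 0" by (rule eig)
  qed
  show False using final_contra[OF len s0 roots] .
qed

end
definition M21 :: "bool list list" where
"M21 = [[False, True, True, True, False, True, True, False, False, False, False, False, False, False, False, True, True, False, True, False, False],
 [True, False, True, False, False, False, True, True, False, False, True, True, False, True, False, False, True, False, False, False, False],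
 [True, True, False, False, False, True, False, False, False, False, False, True, False, True, True, False, False, False, True, False, True],
 [True, False, False, False, True, True, True, False, True, True, False, False, False, False, False, False, False, False, True, True, False],
 [False, False, False, True, False, True, False, False, False, True, True, False, False, True, True, False, True, False, False, True, False],
 [True, False, True, True, True, False, False, False, True, False, False, False, False, False, True, False, True, True, False, False, False],
 [True, True, False, True, False, False, False, True, True, True, False, True, True, False, False, False, False, False, False, False, False],
 [False, True, False, False, False, False, True, False, True, False, False, False, True, True, False, False, True, True, False, True, False],
 [False, False, False, True, False, True, True, True, False, False, False, True, False, False, False, False, False, True, False, True, True],
 [False, False, False, True, True, False, True, False, False, False, True, True, True, False, True, True, False, False, False, False, False],
 [False, True, False, False, True, False, False, False, False, True, False, True, False, False, False, True, True, False, False, True, True],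
 [False, True, True, False, False, False, True, False, True, True, True, False, False, False, True, False, False, False, False, False, True],
 [False, False, False, False, False, False, True, True, False, True, False, False, False, True, True, True, False, True, True, False, False],
 [False, True, True, False, True, False, False, True, False, False, False, False, True, False, True, False, False, False, True, True, False],
 [False, False, True, False, True, True, False, False, False, True, False, True, True, True, False, False, False, True, False, False, False],
 [True, False, False, False, False, False, False, False, False, True, True, False, True, False, False, False, True, True, True, False, True],
 [True, True, False, False, True, True, False, True, False, False, True, False, False, False, False, True, False, True, False, False, False],
 [False, False, False, False, False, True, False, True, True, False, False, False, True, False, True, True, True, False, False, False, True],
 [True, False, True, True, False, False, False, False, False, False, False, False, True, True, False, True, False, False, False, True, True],
 [False, False, False, True, True, False, False, True, True, False, True, False, False, True, False, False, False, False, True, False, True],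
 [False, False, True, False, False, False, False, False, True, False, True, True, False, False, False, True, False, True, True, True, False]]"
definition c21 :: "nat \<Rightarrow> nat \<Rightarrow> bool" where
"c21 x y = (x < 21 \<and> y < 21 \<and> M21 ! x ! y)"

lemma c21_sym_check: "list_all (\<lambda>x. list_all (\<lambda>y. c21 x y = c21 y x) [0..<21]) [0..<21]"
  unfolding c21_def M21_def by code_simp

lemma c21_sym: "c21 x y = c21 y x"
proof (cases "x < 21 \<and> y < 21")
  case True then show ?thesis using c21_sym_check by (auto simp: list_all_iff)
next
  case False then show ?thesis by (auto simp: c21_def)
qed

lemma has_book_check:
  assumes "has_book {..<n} P k"
  shows "\<exists>u\<in>set [0..<n]. \<exists>v\<in>set [0..<n]. u \<noteq> v \<and> P u v \<and>
     k \<le> length (filter (\<lambda>w. w \<noteq> u \<and> w \<noteq> v \<and> P u w \<and> P v w) [0..<n])"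
proof -
  from assms obtain u v S where uv: "u < n" "v < n" "u \<noteq> v" "P u v" "S \<subseteq> {..<n} - {u,v}"
    "card S = k" "\<forall>w\<in>S. P u w \<and> P v w" unfolding has_book_def by auto
  let ?L = "filter (\<lambda>w. w \<noteq> u \<and> w \<noteq> v \<and> P u w \<and> P v w) [0..<n]"
  have "S \<subseteq> set ?L" using uv by auto
  hence "card S \<le> card (set ?L)" by (intro card_mono) auto
  also have "\<dots> \<le> length ?L" by (rule card_length)
  finally have "k \<le> length ?L" using uv by simp
  with uv show ?thesis by (intro bexI[where x=u] bexI[where x=v]) auto
qed


lemma red_check: "\<not> (\<exists>u\<in>set [0..<21]. \<exists>v\<in>set [0..<21]. u \<noteq> v \<and> c21 u v \<and>
     4 \<le> length (filter (\<lambda>w. w \<noteq> u \<and> w \<noteq> v \<and> c21 u w \<and> c21 v w) [0..<21]))"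
  unfolding c21_def M21_def by code_simp

lemma blue_check: "\<not> (\<exists>u\<in>set [0..<21]. \<exists>v\<in>set [0..<21]. u \<noteq> v \<and> \<not> c21 u v \<and>
     7 \<le> length (filter (\<lambda>w. w \<noteq> u \<and> w \<noteq> v \<and> \<not> c21 u w \<and> \<not> c21 v w) [0..<21]))"
  unfolding c21_def M21_def by code_simp

lemma has_book_mono: "has_book V P k \<Longrightarrow> V \<subseteq> W \<Longrightarrow> has_book W P k"
  unfolding has_book_def by blast

lemma lower: assumes "N \<le> 21" shows "\<not> book_arrows N 4 7"
proof
  assume ba: "book_arrows N 4 7"
  have "colouring {..<N} c21" unfolding colouring_def using c21_sym by blast
  with ba have "has_book {..<N} c21 4 \<or> has_book {..<N} (\<lambda>x y. \<not> c21 x y) 7"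
    unfolding book_arrows_def by blast
  moreover have "{..<N} \<subseteq> {..<21}" using assms by auto
  ultimately have "has_book {..<21} c21 4 \<or> has_book {..<21} (\<lambda>x y. \<not> c21 x y) 7"
    using has_book_mono by blast
  thus False
  proof
    assume "has_book {..<21} c21 4"
    from has_book_check[OF this] show False using red_check by blast
  next
    assume "has_book {..<21} (\<lambda>x y. \<not> c21 x y) 7"
    from has_book_check[OF this] show False using blue_check by blast
  qed
qed

lemma upper: "book_arrows 23 4 7"
  unfolding book_arrows_def
proof (intro allI impI)
  fix c assume col: "colouring {..<23} c"
  show "has_book {..<23} c 4 \<or> has_book {..<23} (\<lambda>x y. \<not> c x y) 7"
  proof (rule ccontr)
    assume "\<not> ?thesis"
    hence "bk c" using col unfolding colouring_def by unfold_locales auto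
    thus False using bk.contradiction by blast
  qed
qed

theorem mainTheorem8:
  shows "22 \<le> ramsey_book 4 7 \<and> ramsey_book 4 7 \<le> 23"
proof
  show "ramsey_book 4 7 \<le> 23" unfolding ramsey_book_def by (rule Least_le) (rule upper)
  have "book_arrows (ramsey_book 4 7) 4 7" unfolding ramsey_book_def by (rule LeastI) (rule upper)
  show "22 \<le> ramsey_book 4 7"
  proof (rule ccontr)
    assume "\<not> 22 \<le> ramsey_book 4 7"
    hence "ramsey_book 4 7 \<le> 21" by simp
    thus False using lower \<open>book_arrows (ramsey_book 4 7) 4 7\<close> by blast
  qed
qed

end
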